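(* Let $G$ be a complex reflection group acting on $V\cong\mathbb{C}^2$. The codimension atoms of $G$ are exactly the reflections in $G$ together with the elements $g\in G$ such that $\ell(g)>\operatorname{codim}(g)$.
   Context: A reflection is an element of $GL(V)$ of finite order fixing a hyperplane pointwise; a complex reflection group is a finite subgroup of $GL(V)$ generated by reflections. $\ell(g)$ is the minimal number of reflections in $G$ whose product is $g$ ($\ell(1)=0$), and $\operatorname{codim}(g)=2-\dim\{v\in V:gv=v\}$. The codimension order is $a\le_\perp c$ iff $\operatorname{codim}(a)+\operatorname{codim}(a^{-1}c)=\operatorname{codim}(c)$, and a codimension atom is an element covering the identity in this poset. *)

theory Defs
  imports "HOL-Analysis.Analysis"
begin

type_synonym cmat = "complex^2^2"

text \<open>Fixed space of g acting on V = complex^2, and its complex dimension.\<close>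
definition fixed_space :: "cmat \<Rightarrow> (complex^2) set" where
  "fixed_space g = {v. g *v v = v}"

definition codim :: "cmat \<Rightarrow> nat" where
  "codim g = 2 - vec.dim (fixed_space g)"

text \<open>A reflection: element of GL(V) of finite order, not the identity,
  fixing a hyperplane (complex 1-dimensional subspace) pointwise.\<close>
definition is_reflection :: "cmat \<Rightarrow> bool" where
  "is_reflection g \<longleftrightarrow> invertible g \<and> g \<noteq> mat 1 \<and>
     (\<exists>n>0. (((**) g) ^^ n) (mat 1) = mat 1) \<and>
     (\<exists>H. vec.subspace H \<and> vec.dim H = 1 \<and> (\<forall>v\<in>H. g *v v = v))"

text \<open>Subgroup of GL(V) generated by a set of matrices.\<close>
inductive_set gen_group :: "cmat set \<Rightarrow> cmat set" for S where
  one: "mat 1 \<in> gen_group S"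
| gen: "s \<in> S \<Longrightarrow> s \<in> gen_group S"
| mult: "a \<in> gen_group S \<Longrightarrow> b \<in> gen_group S \<Longrightarrow> a ** b \<in> gen_group S"
| inv: "a \<in> gen_group S \<Longrightarrow> matrix_inv a \<in> gen_group S"

definition complex_reflection_group :: "cmat set \<Rightarrow> bool" where
  "complex_reflection_group G \<longleftrightarrow> finite G \<and>
     (\<exists>R. (\<forall>r\<in>R. is_reflection r) \<and> G = gen_group R)"

text \<open>Reflection length: minimal number of reflections in G with product g.\<close>
definition refl_length :: "cmat set \<Rightarrow> cmat \<Rightarrow> nat" where
  "refl_length G g = (LEAST k. \<exists>rs. length rs = k \<and>
       (\<forall>r\<in>set rs. r \<in> G \<and> is_reflection r) \<and> foldr (**) rs (mat 1) = g)"

definition codim_le :: "cmat \<Rightarrow> cmat \<Rightarrow> bool" where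
  "codim_le a c \<longleftrightarrow> codim a + codim (matrix_inv a ** c) = codim c"

text \<open>Codimension atom: covers the identity in the poset (G, codim_le).\<close>
definition codim_atom :: "cmat set \<Rightarrow> cmat \<Rightarrow> bool" where
  "codim_atom G g \<longleftrightarrow> g \<in> G \<and> g \<noteq> mat 1 \<and> codim_le (mat 1) g \<and>
     \<not> (\<exists>c\<in>G. c \<noteq> mat 1 \<and> c \<noteq> g \<and> codim_le (mat 1) c \<and> codim_le c g)"

end

theory Submission
  imports Defs
begin

lemma minv: assumes "invertible (A::cmat)"
  shows "A ** matrix_inv A = mat 1" "matrix_inv A ** A = mat 1"
proof -
  have "\<exists>A'. A ** A' = mat 1 \<and> A' ** A = mat 1" using assms unfolding invertible_def by blast
  then have "A ** matrix_inv A = mat 1 \<and> matrix_inv A ** A = mat 1"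
    unfolding matrix_inv_def by (rule someI_ex)
  then show "A ** matrix_inv A = mat 1" "matrix_inv A ** A = mat 1" by auto
qed

lemma minv_invertible: assumes "invertible (A::cmat)" shows "invertible (matrix_inv A)"
  using minv[OF assms] unfolding invertible_def by blast

lemma minv_unique: assumes "invertible (A::cmat)" "B ** A = mat 1" shows "matrix_inv A = B"
proof -
  have "matrix_inv A = (B ** A) ** matrix_inv A" using assms(2) by simp
  also have "\<dots> = B" by (simp add: matrix_mul_assoc[symmetric] minv[OF assms(1)])
  finally show ?thesis .
qed

lemma inv_one: "invertible (mat 1 :: cmat)" unfolding invertible_def by (rule exI[of _ "mat 1"]) simp

lemma minv_one: "matrix_inv (mat 1 :: cmat) = mat 1"
  using minv(2)[OF inv_one] by simp

lemma cancel_left: assumes "invertible (c::cmat)" shows "c ** (matrix_inv c ** g) = g"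
  by (simp add: matrix_mul_assoc minv[OF assms])

lemma fixed_subspace: "vec.subspace (fixed_space g)"
  unfolding fixed_space_def vec.subspace_def
  by (auto simp: matrix_vector_right_distrib vector_scalar_commute
      matrix_vector_mult_0_right)

lemma dimU: "vec.dim (UNIV::(complex^2) set) = 2"
  by (rule trans[OF vec_dim_card]) simp

lemma dim_le2: "vec.dim (fixed_space (g::cmat)) \<le> 2"
  using vec.dim_subset[of "fixed_space g" UNIV] dimU by simp

lemma codim0: "codim (g::cmat) = 0 \<longleftrightarrow> g = mat 1"
proof
  assume "codim g = 0"
  then have "vec.dim (fixed_space g) = 2" using dim_le2[of g] unfolding codim_def by simp
  then have "fixed_space g = UNIV"
    using vec.subspace_dim_equal[OF fixed_subspace vec.subspace_UNIV, of g] dimU by simp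
  then show "g = mat 1" unfolding fixed_space_def by (auto simp: matrix_eq)
next
  assume "g = mat 1"
  then have "fixed_space g = UNIV" unfolding fixed_space_def by auto
  then show "codim g = 0" unfolding codim_def using dimU by simp
qed

lemma refl_codim1: assumes "is_reflection g" shows "codim g = 1"
proof -
  obtain H where H: "vec.subspace H" "vec.dim H = 1" "\<forall>v\<in>H. g *v v = v"
    using assms unfolding is_reflection_def by blast
  have "H \<subseteq> fixed_space g" using H(3) unfolding fixed_space_def by auto
  then have "1 \<le> vec.dim (fixed_space g)" using vec.dim_subset H(2) by metis
  moreover have "codim g \<noteq> 0" using codim0 assms unfolding is_reflection_def by blast
  ultimately show ?thesis using dim_le2[of g] unfolding codim_def by linarith
qed

lemma codim1_refl: assumes "invertible g" "g \<noteq> mat 1" "\<exists>n>0. (((**) g) ^^ n) (mat 1) = mat 1"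
  "codim g = 1" shows "is_reflection g"
  unfolding is_reflection_def
proof (intro conjI assms(1,2,3) exI[of _ "fixed_space g"])
  show "vec.subspace (fixed_space g)" by (rule fixed_subspace)
  show "vec.dim (fixed_space g) = 1" using assms(4) dim_le2[of g] unfolding codim_def by linarith
  show "\<forall>v\<in>fixed_space g. g *v v = v" unfolding fixed_space_def by auto
qed

definition pw :: "cmat \<Rightarrow> nat \<Rightarrow> cmat" where "pw g n = (((**) g) ^^ n) (mat 1)"

lemma pw_add: "pw g (a + b) = pw g a ** pw g b"
  by (induction a) (simp_all add: pw_def matrix_mul_assoc)

lemma foldr_mul: "foldr (**) xs (b::cmat) = foldr (**) xs (mat 1) ** b"
  by (induction xs) (simp_all add: matrix_mul_assoc)

context
  fixes R :: "cmat set"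
  assumes R: "\<forall>r\<in>R. is_reflection r"
begin

lemma G_inv: "a \<in> gen_group R \<Longrightarrow> invertible a"
proof (induction rule: gen_group.induct)
  case one then show ?case by (rule inv_one)
next
  case (gen s) then show ?case using R unfolding is_reflection_def by blast
next
  case (mult a b) then show ?case by (simp add: invertible_mult)
next
  case (inv a) then show ?case by (simp add: minv_invertible)
qed

lemma pw_in: "g \<in> gen_group R \<Longrightarrow> pw g n \<in> gen_group R"
  by (induction n) (auto simp: pw_def intro: gen_group.intros)

lemma fin_order: assumes fin: "finite (gen_group R)" and g: "g \<in> gen_group R"
  shows "\<exists>n>0. (((**) g) ^^ n) (mat 1) = mat 1"
proof -
  have "range (pw g) \<subseteq> gen_group R" using pw_in[OF g] by auto
  then have "finite (range (pw g))" using fin finite_subset by blast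
  then have "\<not> inj (pw g)" using finite_imageD infinite_UNIV_nat by blast
  then obtain i j where ij: "i \<noteq> j" "pw g i = pw g j" unfolding inj_def by blast
  obtain a b where ab: "a < b" "pw g a = pw g b"
    using ij by (metis linorder_neqE_nat)
  have inva: "invertible (pw g a)" using G_inv pw_in g by blast
  have "pw g b = pw g (b - a) ** pw g a" using pw_add[of g "b-a" a] ab(1) by simp
  then have "pw g (b - a) = pw g (b - a) ** pw g a ** matrix_inv (pw g a)"
    by (simp add: matrix_mul_assoc[symmetric] minv[OF inva])
  also have "\<dots> = mat 1" using ab(2) \<open>pw g b = _\<close> minv[OF inva] by simp
  finally show ?thesis using ab(1) unfolding pw_def by (intro exI[of _ "b - a"]) simp
qed

lemma inv_refl: assumes fin: "finite (gen_group R)" and r: "r \<in> gen_group R" "is_reflection r"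
  shows "is_reflection (matrix_inv r)"
proof -
  have ir: "invertible r" using r unfolding is_reflection_def by blast
  have ne: "matrix_inv r \<noteq> mat 1"
  proof
    assume "matrix_inv r = mat 1"
    then have "r = mat 1" using minv(1)[OF ir] by simp
    then show False using r unfolding is_reflection_def by blast
  qed
  obtain H where H: "vec.subspace H" "vec.dim H = 1" "\<forall>v\<in>H. r *v v = v"
    using r unfolding is_reflection_def by blast
  have "\<forall>v\<in>H. matrix_inv r *v v = v"
  proof
    fix v assume "v \<in> H"
    then have "matrix_inv r *v v = matrix_inv r *v (r *v v)" using H(3) by simp
    also have "\<dots> = v" by (simp add: matrix_vector_mul_assoc minv[OF ir])
    finally show "matrix_inv r *v v = v" .
  qed
  then show ?thesis unfolding is_reflection_def
    using minv_invertible[OF ir] ne fin_order[OF fin gen_group.inv[OF r(1)]] H(1,2) by blast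
qed

lemma foldr_rev_inv: "\<forall>r\<in>set rs. invertible r \<Longrightarrow>
  foldr (**) (rev (map matrix_inv rs)) (mat 1) ** foldr (**) rs (mat 1) = (mat 1::cmat)"
proof (induction rs)
  case Nil then show ?case by simp
next
  case (Cons r rs)
  have ir: "invertible r" using Cons.prems by simp
  have "foldr (**) (rev (map matrix_inv (r # rs))) (mat 1) =
        foldr (**) (rev (map matrix_inv rs)) (mat 1) ** matrix_inv r"
    using foldr_mul[of "rev (map matrix_inv rs)" "matrix_inv r"] by simp
  then have "foldr (**) (rev (map matrix_inv (r # rs))) (mat 1) ** foldr (**) (r # rs) (mat 1)
     = foldr (**) (rev (map matrix_inv rs)) (mat 1) ** (matrix_inv r ** r) ** foldr (**) rs (mat 1)"
    by (simp add: matrix_mul_assoc)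
  also have "\<dots> = mat 1" using Cons minv[OF ir] by simp
  finally show ?case .
qed

lemma decomp: assumes fin: "finite (gen_group R)"
  shows "a \<in> gen_group R \<Longrightarrow> \<exists>rs. (\<forall>r\<in>set rs. r \<in> gen_group R \<and> is_reflection r) \<and>
     foldr (**) rs (mat 1) = a"
proof (induction rule: gen_group.induct)
  case one then show ?case by (intro exI[of _ "[]"]) simp
next
  case (gen s) then show ?case using R by (intro exI[of _ "[s]"]) (auto intro: gen_group.gen)
next
  case (mult a b)
  then obtain xs ys where xs: "\<forall>r\<in>set xs. r \<in> gen_group R \<and> is_reflection r" "foldr (**) xs (mat 1) = a"
    and ys: "\<forall>r\<in>set ys. r \<in> gen_group R \<and> is_reflection r" "foldr (**) ys (mat 1) = b" by blast
  have "foldr (**) (xs @ ys) (mat 1) = a ** b" using xs(2) ys(2) foldr_mul[of xs b] by simp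
  then show ?case using xs(1) ys(1) by (intro exI[of _ "xs @ ys"]) auto
next
  case (inv a)
  then obtain xs where xs: "\<forall>r\<in>set xs. r \<in> gen_group R \<and> is_reflection r" "foldr (**) xs (mat 1) = a"
    by blast
  have "\<forall>r\<in>set xs. invertible r" using xs(1) unfolding is_reflection_def by blast
  from foldr_rev_inv[OF this] xs(2)
  have "matrix_inv a = foldr (**) (rev (map matrix_inv xs)) (mat 1)"
    using minv_unique G_inv inv.hyps by blast
  moreover have "\<forall>r\<in>set (rev (map matrix_inv xs)). r \<in> gen_group R \<and> is_reflection r"
    using xs(1) inv_refl[OF fin] by (auto intro: gen_group.inv)
  ultimately show ?case by metis
qed

end

theorem mainTheorem10:
  assumes "complex_reflection_group G"
  shows "\<forall>g\<in>G. codim_atom G g \<longleftrightarrow> (is_reflection g \<or> refl_length G g > codim g)"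
proof
  obtain R where R: "\<forall>r\<in>R. is_reflection r" and GR: "G = gen_group R" and fin: "finite G"
    using assms unfolding complex_reflection_group_def by blast
  have Ginv: "\<And>a. a \<in> G \<Longrightarrow> invertible a" using G_inv[OF R] GR by blast
  have Gord: "\<And>a. a \<in> G \<Longrightarrow> \<exists>n>0. (((**) a) ^^ n) (mat 1) = mat 1"
    using fin_order[OF R] GR fin by blast
  have Gmul: "\<And>c g. c \<in> G \<Longrightarrow> g \<in> G \<Longrightarrow> matrix_inv c ** g \<in> G"
    using GR by (auto intro: gen_group.intros)
  have le1: "\<And>c. codim_le (mat 1) c" unfolding codim_le_def using codim0 minv_one by simp
  have reflG: "\<And>c. c \<in> G \<Longrightarrow> c \<noteq> mat 1 \<Longrightarrow> codim c = 1 \<Longrightarrow> is_reflection c"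
    using codim1_refl Ginv Gord by blast
  fix g assume g: "g \<in> G"
  define P where "P = (\<lambda>k. \<exists>rs. length rs = k \<and>
       (\<forall>r\<in>set rs. r \<in> G \<and> is_reflection r) \<and> foldr (**) rs (mat 1) = g)"
  have rl: "refl_length G g = Least P" unfolding refl_length_def P_def by simp
  have exP: "\<exists>k. P k" using decomp[OF R] fin GR g unfolding P_def by blast
  have cle2: "codim g \<le> 2" unfolding codim_def by simp
  show "codim_atom G g \<longleftrightarrow> (is_reflection g \<or> refl_length G g > codim g)"
  proof (cases "g = mat 1")
    case True
    have "P 0" unfolding P_def using True by (intro exI[of _ "[]"]) simp
    then have "refl_length G g = 0" using rl by (simp add: Least_eq_0)
    moreover have "\<not> is_reflection g" using True unfolding is_reflection_def by simp
    ultimately show ?thesis using True unfolding codim_atom_def by simp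
  next
    case ng: False
    have c0: "codim g \<noteq> 0" using codim0 ng by simp
    show ?thesis
    proof (cases "codim g = 1")
      case True
      have "is_reflection g" using reflG g ng True by blast
      moreover have "codim_atom G g"
        unfolding codim_atom_def
      proof (intro conjI g ng le1 notI)
        assume "\<exists>c\<in>G. c \<noteq> mat 1 \<and> c \<noteq> g \<and> codim_le (mat 1) c \<and> codim_le c g"
        then obtain c where c: "c \<in> G" "c \<noteq> mat 1" "c \<noteq> g" "codim_le c g" by blast
        have "codim c \<noteq> 0" using codim0 c(2) by simp
        then have "codim (matrix_inv c ** g) = 0" using c(4) True unfolding codim_le_def by simp
        then have "matrix_inv c ** g = mat 1" using codim0 by simp
        then have "g = c" using cancel_left[OF Ginv[OF c(1)], of g] by simp
        then show False using c(3) by simp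
      qed
      ultimately show ?thesis by simp
    next
      case False
      then have c2: "codim g = 2" using c0 cle2 by simp
      have nr: "\<not> is_reflection g" using refl_codim1 c2 by fastforce
      have PL: "P (refl_length G g)" using rl exP LeastI_ex by metis
      then obtain rs where rs: "length rs = refl_length G g" "\<forall>r\<in>set rs. r \<in> G \<and> is_reflection r"
        "foldr (**) rs (mat 1) = g" unfolding P_def by blast
      have "refl_length G g \<noteq> 0" using rs(1,3) ng by (metis foldr.simps(1) id_apply length_0_conv)
      moreover have "refl_length G g \<noteq> 1"
      proof
        assume "refl_length G g = 1"
        then obtain r where "rs = [r]" using rs(1) by (cases rs) auto
        then show False using rs nr by simp
      qed
      ultimately have ge2: "refl_length G g \<ge> 2" by linarith
      have "codim_atom G g \<longleftrightarrow> refl_length G g > 2"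
      proof
        assume at: "codim_atom G g"
        show "refl_length G g > 2"
        proof (rule ccontr)
          assume "\<not> refl_length G g > 2"
          then have "length rs = 2" using ge2 rs(1) by simp
          then obtain r1 r2 where r12: "rs = [r1, r2]"
            by (metis (no_types, lifting) One_nat_def Suc_1 length_0_conv length_Suc_conv)
          have r1: "r1 \<in> G" "is_reflection r1" and r2: "r2 \<in> G" "is_reflection r2"
            using rs(2) r12 by auto
          have gr: "g = r1 ** r2" using rs(3) r12 by simp
          have i1: "invertible r1" using Ginv r1 by blast
          have "matrix_inv r1 ** g = r2" using gr
            by (simp add: matrix_mul_assoc minv[OF i1])
          then have "codim_le r1 g" unfolding codim_le_def
            using refl_codim1 r1 r2 c2 by simp
          moreover have "r1 \<noteq> mat 1" "r1 \<noteq> g" using r1 nr unfolding is_reflection_def by metis+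
          ultimately show False using at r1 le1 unfolding codim_atom_def by blast
        qed
      next
        assume gt: "refl_length G g > 2"
        show "codim_atom G g" unfolding codim_atom_def
        proof (intro conjI g ng le1 notI)
          assume "\<exists>c\<in>G. c \<noteq> mat 1 \<and> c \<noteq> g \<and> codim_le (mat 1) c \<and> codim_le c g"
          then obtain c where c: "c \<in> G" "c \<noteq> mat 1" "c \<noteq> g" "codim_le c g" by blast
          have ic: "invertible c" using Ginv c(1) by blast
          have cg: "c ** (matrix_inv c ** g) = g" using cancel_left[OF ic] .
          have cc0: "codim c \<noteq> 0" using codim0 c(2) by simp
          have d0: "codim (matrix_inv c ** g) \<noteq> 0"
          proof
            assume "codim (matrix_inv c ** g) = 0"
            then have "matrix_inv c ** g = mat 1" using codim0 by simp
            then show False using cg c(3) by simp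
          qed
          have cc: "codim c \<le> 2" "codim (matrix_inv c ** g) \<le> 2" unfolding codim_def by auto
          have e1: "codim c = 1" and e2: "codim (matrix_inv c ** g) = 1"
            using c(4) c2 cc0 d0 cc unfolding codim_le_def by linarith+
          have n2: "matrix_inv c ** g \<noteq> mat 1" using d0 codim0 by metis
          have rc: "is_reflection c" "is_reflection (matrix_inv c ** g)"
            using reflG[OF c(1,2) e1] reflG[OF Gmul[OF c(1) g] n2 e2] by auto
          have "P 2" unfolding P_def
            using rc c(1) Gmul[OF c(1) g] cg
            by (intro exI[of _ "[c, matrix_inv c ** g]"]) auto
          then have "refl_length G g \<le> 2" using rl Least_le by metis
          then show False using gt by simp
        qed
      qed
      then show ?thesis using nr c2 by simp
    qed
  qed
qed

end
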